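(* Let $\mathcal{D}$ be a complex vector space and let $\mathfrak{t},\mathfrak{w}$ be sesquilinear forms on $\mathcal{D}$ such that $\mathfrak{w}\geq 0$ and $M_l(\mathfrak{t})\neq\varnothing$. Then $\mathfrak{t}=\mathfrak{t}_{lr}+\mathfrak{t}_{ls}$, where $\mathfrak{t}_{lr}$ is a $\mathfrak{w}$-left regular sesquilinear form on $\mathcal{D}$ and $\mathfrak{t}_{ls}$ is a $\mathfrak{w}$-left strongly singular sesquilinear form on $\mathcal{D}$.
   Context: A sesquilinear form on $\mathcal{D}$ is a map $\mathfrak{t}:\mathcal{D}\times\mathcal{D}\to\mathbb{C}$, linear in the first and anti-linear in the second variable; write $\mathfrak{t}[f]=\mathfrak{t}(f,f)$. It is non-negative ($\mathfrak{t}\geq0$) if $\mathfrak{t}[f]\geq 0$ for all $f$. For non-negative forms $\mathfrak{u},\mathfrak{w}$ on $\mathcal{D}$: $\mathfrak{u}$ is $\mathfrak{w}$-absolutely continuous if whenever $\{f_n\}\subset\mathcal{D}$ satisfies $\mathfrak{w}[f_n]\to0$ and $\mathfrak{u}[f_n-f_m]\to0$ (as $n,m\to\infty$), then $\mathfrak{u}[f_n]\to0$; $\mathfrak{u}$ is $\mathfrak{w}$-singular if for every $f\in\mathcal{D}$ there is $\{f_n\}\subset\mathcal{D}$ with $\mathfrak{w}[f_n]\to0$ and $\mathfrak{u}[f-f_n]\to0$. For a sesquilinear form $\mathfrak{t}$, $M_l(\mathfrak{t})$ denotes the set of non-negative forms $\mathfrak{s}_1$ on $\mathcal{D}$ for which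 there exists a non-negative form $\mathfrak{s}_2$ on $\mathcal{D}$ with $|\mathfrak{t}(f,g)|\leq \mathfrak{s}_1[f]^{1/2}\mathfrak{s}_2[g]^{1/2}$ for all $f,g\in\mathcal{D}$. $\mathfrak{t}$ is $\mathfrak{w}$-left regular if some $\mathfrak{s}_1\in M_l(\mathfrak{t})$ is $\mathfrak{w}$-absolutely continuous, and $\mathfrak{w}$-left strongly singular if some $\mathfrak{s}_1\in M_l(\mathfrak{t})$ is $\mathfrak{w}$-singular. *)

theory Defs
  imports "HOL-Analysis.Analysis"
begin

text \<open>The domain D is the whole of a complex vector space: carrier type 'v with
  scalar multiplication smul, assumed to satisfy vector_space smul.\<close>

definition sesquilinear :: "(complex \<Rightarrow> 'v::ab_group_add \<Rightarrow> 'v) \<Rightarrow> ('v \<Rightarrow> 'v \<Rightarrow> complex) \<Rightarrow> bool" where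
  "sesquilinear smul t \<longleftrightarrow>
     (\<forall>f g h. t (f + g) h = t f h + t g h) \<and>
     (\<forall>(a::complex) f h. t (smul a f) h = a * t f h) \<and>
     (\<forall>f g h. t f (g + h) = t f g + t f h) \<and>
     (\<forall>(a::complex) f h. t f (smul a h) = cnj a * t f h)"

definition qf :: "('v \<Rightarrow> 'v \<Rightarrow> complex) \<Rightarrow> 'v \<Rightarrow> complex" where
  "qf t f = t f f"

definition nonneg_form :: "(complex \<Rightarrow> 'v::ab_group_add \<Rightarrow> 'v) \<Rightarrow> ('v \<Rightarrow> 'v \<Rightarrow> complex) \<Rightarrow> bool" where
  "nonneg_form smul t \<longleftrightarrow> sesquilinear smul t \<and> (\<forall>f. Im (qf t f) = 0 \<and> Re (qf t f) \<ge> 0)"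

definition abs_cont :: "('v::ab_group_add \<Rightarrow> 'v \<Rightarrow> complex) \<Rightarrow> ('v \<Rightarrow> 'v \<Rightarrow> complex) \<Rightarrow> bool" where
  "abs_cont u w \<longleftrightarrow>
     (\<forall>fs :: nat \<Rightarrow> 'v.
        ((\<lambda>n. qf w (fs n)) \<longlonglongrightarrow> 0) \<and>
        (\<forall>e>0. \<exists>N. \<forall>n\<ge>N. \<forall>m\<ge>N. cmod (qf u (fs n - fs m)) < e)
        \<longrightarrow> ((\<lambda>n. qf u (fs n)) \<longlonglongrightarrow> 0))"

definition singular_form :: "('v::ab_group_add \<Rightarrow> 'v \<Rightarrow> complex) \<Rightarrow> ('v \<Rightarrow> 'v \<Rightarrow> complex) \<Rightarrow> bool" where
  "singular_form u w \<longleftrightarrow>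
     (\<forall>f. \<exists>fs :: nat \<Rightarrow> 'v.
        ((\<lambda>n. qf w (fs n)) \<longlonglongrightarrow> 0) \<and> ((\<lambda>n. qf u (f - fs n)) \<longlonglongrightarrow> 0))"

definition M_l :: "(complex \<Rightarrow> 'v::ab_group_add \<Rightarrow> 'v) \<Rightarrow> ('v \<Rightarrow> 'v \<Rightarrow> complex) \<Rightarrow> ('v \<Rightarrow> 'v \<Rightarrow> complex) set" where
  "M_l smul t = {s1. nonneg_form smul s1 \<and> (\<exists>s2. nonneg_form smul s2 \<and>
      (\<forall>f g. cmod (t f g) \<le> sqrt (Re (qf s1 f)) * sqrt (Re (qf s2 g))))}"

definition left_regular :: "(complex \<Rightarrow> 'v::ab_group_add \<Rightarrow> 'v) \<Rightarrow> ('v \<Rightarrow> 'v \<Rightarrow> complex) \<Rightarrow> ('v \<Rightarrow> 'v \<Rightarrow> complex) \<Rightarrow> bool" where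
  "left_regular smul t w \<longleftrightarrow> (\<exists>s1\<in>M_l smul t. abs_cont s1 w)"

definition left_strongly_singular :: "(complex \<Rightarrow> 'v::ab_group_add \<Rightarrow> 'v) \<Rightarrow> ('v \<Rightarrow> 'v \<Rightarrow> complex) \<Rightarrow> ('v \<Rightarrow> 'v \<Rightarrow> complex) \<Rightarrow> bool" where
  "left_strongly_singular smul t w \<longleftrightarrow> (\<exists>s1\<in>M_l smul t. singular_form s1 w)"

end

theory Submission
  imports Defs
begin


locale vs = vector_space smul for smul :: "complex \<Rightarrow> 'v::ab_group_add \<Rightarrow> 'v"
begin

definition Q :: "('v \<Rightarrow> 'v \<Rightarrow> complex) \<Rightarrow> 'v \<Rightarrow> real" where
  "Q q x = Re (q x x)"

lemma sesq_rules:
  assumes "sesquilinear smul t"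
  shows "t (f + g) h = t f h + t g h" "t (smul a f) h = a * t f h"
    "t f (g + h) = t f g + t f h" "t f (smul a h) = cnj a * t f h"
    "t 0 h = 0" "t f 0 = 0" "t (- f) h = - t f h" "t f (- h) = - t f h"
    "t (f - g) h = t f h - t g h" "t f (g - h) = t f g - t f h"
proof -
  show A: "\<And>f g h. t (f + g) h = t f h + t g h" "\<And>a f h. t (smul a f) h = a * t f h"
    "\<And>f g h. t f (g + h) = t f g + t f h" "\<And> a f h. t f (smul a h) = cnj a * t f h"
    using assms unfolding sesquilinear_def by blast+
  show Z1: "\<And>h. t 0 h = 0" using A(1)[of 0 0] by simp
  show Z2: "\<And>f. t f 0 = 0" using A(3)[of _ 0 0] by simp
  show N1: "\<And>f h. t (- f) h = - t f h" using A(1)[of _ "- _"] Z1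
    by (metis add.right_inverse add_eq_0_iff)
  show N2: "\<And>f h. t f (- h) = - t f h" using A(3)[of _ _ "- _"] Z2
    by (metis add.right_inverse add_eq_0_iff)
  show "t (f - g) h = t f h - t g h" using A(1)[of f "-g"] N1 by simp
  show "t f (g - h) = t f g - t f h" using A(3)[of f g "-h"] N2 by simp
qed

lemma nonneg_sesq: "nonneg_form smul q \<Longrightarrow> sesquilinear smul q"
  by (simp add: nonneg_form_def)

lemma nonneg_qf: assumes "nonneg_form smul q" shows "Im (q x x) = 0" "Re (q x x) \<ge> 0"
  "q x x = complex_of_real (Q q x)" "Q q x \<ge> 0"
  using assms unfolding nonneg_form_def qf_def Q_def by (auto simp: complex_eq_iff)

lemma herm:
  assumes q: "nonneg_form smul q"
  shows "q g f = cnj (q f g)"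
proof -
  note R = sesq_rules[OF nonneg_sesq[OF q]]
  have "Im (q (f + g) (f + g)) = 0" by (rule nonneg_qf(1)[OF q])
  hence 1: "Im (q f g + q g f) = 0" using nonneg_qf(1)[OF q, of f] nonneg_qf(1)[OF q, of g]
    by (simp add: R)
  have "Im (q (f + smul \<i> g) (f + smul \<i> g)) = 0" by (rule nonneg_qf(1)[OF q])
  hence 2: "Im (- \<i> * q f g + \<i> * q g f) = 0"
    using nonneg_qf(1)[OF q, of f] nonneg_qf(1)[OF q, of g]
    by (simp add: R)
  show ?thesis using 1 2 by (simp add: complex_eq_iff)
qed

lemma expand:
  assumes q: "nonneg_form smul q"
  shows "Q q (x - smul \<alpha> y) = Q q x - 2 * Re (cnj \<alpha> * q x y) + (cmod \<alpha>)\<^sup>2 * Q q y"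
proof -
  note R = sesq_rules[OF nonneg_sesq[OF q]]
  have "q (x - smul \<alpha> y) (x - smul \<alpha> y) = q x x - cnj \<alpha> * q x y - \<alpha> * q y x + \<alpha> * cnj \<alpha> * q y y"
    by (simp add: R algebra_simps)
  also have "q y x = cnj (q x y)" by (rule herm[OF q])
  finally have e: "q (x - smul \<alpha> y) (x - smul \<alpha> y) = q x x - cnj \<alpha> * q x y - \<alpha> * cnj (q x y) + \<alpha> * cnj \<alpha> * q y y" .
  have "\<alpha> * cnj \<alpha> = complex_of_real ((cmod \<alpha>)\<^sup>2)" by (rule complex_norm_square[symmetric])
  moreover have "Re (\<alpha> * cnj (q x y)) = Re (cnj \<alpha> * q x y)"
    by simp
  moreover have "Re (complex_of_real r * q y y) = r * Re (q y y)" for r by simp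
  ultimately show ?thesis unfolding Q_def e by simp
qed

lemma Q_nonneg: "nonneg_form smul q \<Longrightarrow> Q q x \<ge> 0"
  by (rule nonneg_qf(4))

lemma discr:
  fixes A b C :: real
  assumes "\<And>l. 0 \<le> A - 2 * l * b + l\<^sup>2 * C" "C \<ge> 0"
  shows "b\<^sup>2 \<le> A * C"
proof (cases "C = 0")
  case True
  have "b = 0"
  proof (rule ccontr)
    assume b: "b \<noteq> 0"
    have "0 \<le> A - 2 * ((A + 1) / (2 * b)) * b" using assms(1)[of "(A+1)/(2*b)"] True by simp
    also have "2 * ((A + 1) / (2 * b)) * b = A + 1" using b by (simp add: field_simps)
    finally show False by simp
  qed
  then show ?thesis using True by simp
next
  case False
  hence C: "C > 0" using assms(2) by simp
  have "0 \<le> A - 2 * (b / C) * b + (b / C)\<^sup>2 * C" by (rule assms(1))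
  also have "\<dots> = A - b\<^sup>2 / C" using C by (simp add: power2_eq_square field_simps)
  finally show ?thesis using C by (simp add: field_simps)
qed

lemma cnj_sgn_mult: "cnj (sgn z) * z = complex_of_real (cmod z)"
proof (cases "z = 0")
  case False
  have "cnj (sgn z) * z = (cnj z * z) / complex_of_real (cmod z)"
    by (simp add: sgn_div_norm scaleR_conv_of_real field_simps)
  also have "cnj z * z = complex_of_real ((cmod z)\<^sup>2)" by (metis complex_norm_square mult.commute)
  finally show ?thesis using False by (simp add: power2_eq_square)
qed simp

lemma CS:
  assumes q: "nonneg_form smul q"
  shows "(cmod (q x y))\<^sup>2 \<le> Q q x * Q q y"
proof (cases "q x y = 0")
  case True then show ?thesis by (simp add: Q_nonneg[OF q])
next
  case False
  have "0 \<le> Q q x - 2 * l * cmod (q x y) + l\<^sup>2 * Q q y" for l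
  proof -
    have "0 \<le> Q q (x - smul (complex_of_real l * sgn (q x y)) y)" by (rule Q_nonneg[OF q])
    also have "\<dots> = Q q x - 2 * Re (cnj (complex_of_real l * sgn (q x y)) * q x y) + (cmod (complex_of_real l * sgn (q x y)))\<^sup>2 * Q q y"
      by (rule expand[OF q])
    also have "cnj (complex_of_real l * sgn (q x y)) * q x y = complex_of_real (l * cmod (q x y))"
      using cnj_sgn_mult[of "q x y"] by simp
    also have "(cmod (complex_of_real l * sgn (q x y)))\<^sup>2 = l\<^sup>2" using False by (simp add: norm_mult norm_sgn power2_eq_square)
    finally show ?thesis by simp
  qed
  thus ?thesis by (rule discr) (rule Q_nonneg[OF q])
qed

definition nm :: "('v \<Rightarrow> 'v \<Rightarrow> complex) \<Rightarrow> 'v \<Rightarrow> real" where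
  "nm q x = sqrt (Q q x)"

lemma CS2: assumes q: "nonneg_form smul q" shows "cmod (q x y) \<le> nm q x * nm q y"
  unfolding nm_def using CS[OF q, of x y] Q_nonneg[OF q]
  by (metis real_le_rsqrt real_sqrt_mult norm_ge_zero real_sqrt_le_iff real_sqrt_abs abs_norm_cancel power2_eq_square)

lemma Q_add: assumes q: "nonneg_form smul q" shows "Q q (x + y) = Q q x + 2 * Re (q x y) + Q q y"
proof -
  note R = sesq_rules[OF nonneg_sesq[OF q]]
  have "q (x + y) (x + y) = q x x + q x y + q y x + q y y" by (simp add: R)
  moreover have "Re (q y x) = Re (q x y)" using herm[OF q, of y x] by simp
  ultimately show ?thesis unfolding Q_def by simp
qed

lemma nm_nonneg: "nonneg_form smul q \<Longrightarrow> nm q x \<ge> 0" unfolding nm_def by (simp add: Q_nonneg)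

lemma nm_sq: "nonneg_form smul q \<Longrightarrow> (nm q x)\<^sup>2 = Q q x"
  unfolding nm_def by (simp add: Q_nonneg)

lemma nm_tri: assumes q: "nonneg_form smul q" shows "nm q (x + y) \<le> nm q x + nm q y"
proof -
  have "(nm q (x + y))\<^sup>2 \<le> (nm q x + nm q y)\<^sup>2"
  proof -
    have "(nm q (x + y))\<^sup>2 = Q q x + 2 * Re (q x y) + Q q y" using nm_sq[OF q] Q_add[OF q] by simp
    also have "Re (q x y) \<le> nm q x * nm q y" using CS2[OF q, of x y] complex_Re_le_cmod[of "q x y"] by linarith
    hence "Q q x + 2 * Re (q x y) + Q q y \<le> (nm q x + nm q y)\<^sup>2"
      using nm_sq[OF q, of x] nm_sq[OF q, of y] by (simp add: power2_eq_square algebra_simps)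
    finally show ?thesis .
  qed
  thus ?thesis using nm_nonneg[OF q] by (meson add_nonneg_nonneg power2_le_imp_le)
qed

lemma nm_scale: assumes q: "nonneg_form smul q" shows "nm q (smul a x) = cmod a * nm q x"
proof -
  have "Q q (smul a x) = (cmod a)\<^sup>2 * Q q x"
    using expand[OF q, of 0 "-a" x] sesq_rules[OF nonneg_sesq[OF q]]
    by (simp add: Q_def scale_minus_left)
  thus ?thesis unfolding nm_def by (simp add: real_sqrt_mult)
qed

lemma nm_neg: assumes q: "nonneg_form smul q" shows "nm q (- x) = nm q x"
  using nm_scale[OF q, of "-1" x] by (simp add: scale_minus_left)

lemma nm_diff: assumes q: "nonneg_form smul q" shows "nm q (x - y) \<le> nm q x + nm q y"
  using nm_tri[OF q, of x "-y"] nm_neg[OF q, of y] by simp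

lemma nm_rev: assumes q: "nonneg_form smul q" shows "\<bar>nm q x - nm q y\<bar> \<le> nm q (x - y)"
  using nm_tri[OF q, of "x - y" y] nm_tri[OF q, of "y - x" x] nm_neg[OF q, of "x - y"]
  by (simp add: abs_le_iff)

lemma Q_add_le: assumes q: "nonneg_form smul q" shows "Q q (x + y) \<le> 2 * Q q x + 2 * Q q y"
proof -
  have "(nm q (x+y))\<^sup>2 \<le> (nm q x + nm q y)\<^sup>2" using nm_tri[OF q] nm_nonneg[OF q] by (simp add: power_mono)
  also have "\<dots> \<le> 2 * (nm q x)\<^sup>2 + 2 * (nm q y)\<^sup>2" using power2_sum[of "nm q x" "nm q y"] power2_diff[of "nm q x" "nm q y"] zero_le_power2[of "nm q x - nm q y"] by linarith
  finally show ?thesis by (simp add: nm_sq[OF q])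
qed

lemma Q_diff_le: assumes q: "nonneg_form smul q" shows "Q q (x - y) \<le> 2 * Q q x + 2 * Q q y"
  using Q_add_le[OF q, of x "-y"] nm_neg[OF q, of y] nm_sq[OF q] by (metis diff_conv_add_uminus)

lemma Q_scale: assumes q: "nonneg_form smul q" shows "Q q (smul a x) = (cmod a)\<^sup>2 * Q q x"
  using nm_scale[OF q, of a x] nm_sq[OF q] by (metis power_mult_distrib)

lemma Q_diff_le3: assumes q: "nonneg_form smul q"
  shows "Q q (x - (y + z)) \<le> 2 * Q q x + 4 * Q q y + 4 * Q q z"
  using Q_diff_le[OF q, of x "y + z"] Q_add_le[OF q, of y z] by linarith

lemma inv_suc_small: "(e::real) > 0 \<Longrightarrow> \<exists>M. \<forall>k\<ge>M. 1 / real (Suc k) < e"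
proof -
  assume e: "e > 0"
  obtain M :: nat where M: "1 / e < real M" using reals_Archimedean2 by blast
  have "1 / real (Suc k) < e" if "k \<ge> M" for k
  proof -
    have "1 / e < real (Suc k)" using M that by simp
    thus ?thesis using e by (simp add: field_simps)
  qed
  thus ?thesis by blast
qed

lemma qcauchy_bounded:
  fixes a :: "nat \<Rightarrow> 'v"
  assumes q: "nonneg_form smul q" and c: "\<forall>\<epsilon>>0. \<exists>M. \<forall>n\<ge>M. \<forall>m\<ge>M. Q q (a n - a m) < \<epsilon>"
  shows "\<exists>B\<ge>0. \<forall>n. nm q (a n) \<le> B"
proof -
  obtain M where M: "\<forall>n\<ge>M. \<forall>m\<ge>M. Q q (a n - a m) < 1" using c by (meson zero_less_one)
  define B where "B = (\<Sum>k\<le>M. nm q (a k)) + 1"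
  have le: "nm q (a k) \<le> (\<Sum>k\<le>M. nm q (a k))" if "k \<le> M" for k
    using that by (intro member_le_sum) (auto simp: nm_nonneg[OF q])
  have "nm q (a n) \<le> B" for n
  proof (cases "n \<le> M")
    case True then show ?thesis using le unfolding B_def by force
  next
    case False
    have "Q q (a n - a M) < 1" using M False by simp
    hence "nm q (a n - a M) < 1" unfolding nm_def using real_sqrt_less_mono[of _ 1] by fastforce
    moreover have "nm q (a n) \<le> nm q (a M) + nm q (a n - a M)" using nm_rev[OF q, of "a n" "a M"] by simp
    ultimately show ?thesis using le[of M] unfolding B_def by simp
  qed
  moreover have "B \<ge> 0" unfolding B_def by (simp add: nm_nonneg[OF q] sum_nonneg add_nonneg_nonneg)
  ultimately show ?thesis by blast
qed

lemma nm_tendsto0: fixes d :: "nat \<Rightarrow> 'v" assumes q: "nonneg_form smul q" and d: "(\<lambda>n. Q q (d n)) \<longlonglongrightarrow> 0"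
  shows "(\<lambda>n. nm q (d n)) \<longlonglongrightarrow> 0"
  unfolding nm_def using tendsto_real_sqrt[OF d] by simp

lemma prod_tendsto0:
  fixes d b :: "nat \<Rightarrow> 'v"
  assumes q: "nonneg_form smul q" and d: "(\<lambda>n. Q q (d n)) \<longlonglongrightarrow> 0" and b: "\<forall>n. nm q (b n) \<le> B"
  shows "(\<lambda>n. q (d n) (b n)) \<longlonglongrightarrow> 0" "(\<lambda>n. q (b n) (d n)) \<longlonglongrightarrow> 0"
proof -
  have z: "(\<lambda>n. nm q (d n) * B) \<longlonglongrightarrow> 0" using tendsto_mult_left_zero[OF nm_tendsto0[OF q d]] by simp
  have "cmod (q (d n) (b n)) \<le> nm q (d n) * B" for n
    using CS2[OF q, of "d n" "b n"] b nm_nonneg[OF q, of "d n"] by (smt (verit) mult_left_mono)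
  thus "(\<lambda>n. q (d n) (b n)) \<longlonglongrightarrow> 0" by (intro Lim_null_comparison[OF _ z]) auto
  have "cmod (q (b n) (d n)) \<le> nm q (d n) * B" for n
    using CS2[OF q, of "b n" "d n"] b nm_nonneg[OF q, of "d n"] by (smt (verit) mult.commute mult_left_mono)
  thus "(\<lambda>n. q (b n) (d n)) \<longlonglongrightarrow> 0" by (intro Lim_null_comparison[OF _ z]) auto
qed

lemma pair_cauchy:
  fixes a b :: "nat \<Rightarrow> 'v"
  assumes q: "nonneg_form smul q"
    and ca: "\<forall>\<epsilon>>0. \<exists>M. \<forall>n\<ge>M. \<forall>m\<ge>M. Q q (a n - a m) < \<epsilon>"
    and cb: "\<forall>\<epsilon>>0. \<exists>M. \<forall>n\<ge>M. \<forall>m\<ge>M. Q q (b n - b m) < \<epsilon>"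
  shows "convergent (\<lambda>n. q (a n) (b n))"
proof -
  obtain Ba where Ba: "Ba \<ge> 0" "\<forall>n. nm q (a n) \<le> Ba" using qcauchy_bounded[OF q ca] by blast
  obtain Bb where Bb: "Bb \<ge> 0" "\<forall>n. nm q (b n) \<le> Bb" using qcauchy_bounded[OF q cb] by blast
  have "Cauchy (\<lambda>n. q (a n) (b n))"
  proof (rule CauchyI)
    fix e :: real assume e: "e > 0"
    define \<delta> where "\<delta> = e / (2 * (Ba + Bb + 1))"
    have dp: "\<delta> > 0" unfolding \<delta>_def using e Ba Bb by simp
    obtain M1 where M1: "\<forall>n\<ge>M1. \<forall>m\<ge>M1. Q q (a n - a m) < \<delta>\<^sup>2" using ca dp by (meson zero_less_power)
    obtain M2 where M2: "\<forall>n\<ge>M2. \<forall>m\<ge>M2. Q q (b n - b m) < \<delta>\<^sup>2" using cb dp by (meson zero_less_power)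
    have sq: "nm q x < \<delta>" if "Q q x < \<delta>\<^sup>2" for x
      unfolding nm_def using real_sqrt_less_mono[OF that] dp by simp
    have "norm (q (a m) (b m) - q (a n) (b n)) < e" if "m \<ge> max M1 M2" "n \<ge> max M1 M2" for m n
    proof -
      note R = sesq_rules[OF nonneg_sesq[OF q]]
      have "q (a m) (b m) - q (a n) (b n) = q (a m - a n) (b m) + q (a n) (b m - b n)"
        by (simp add: R)
      hence "norm (q (a m) (b m) - q (a n) (b n)) \<le> cmod (q (a m - a n) (b m)) + cmod (q (a n) (b m - b n))"
        by (simp add: norm_triangle_ineq)
      also have "cmod (q (a m - a n) (b m)) \<le> \<delta> * Bb"
        using CS2[OF q, of "a m - a n" "b m"] sq[of "a m - a n"] M1 that Bb nm_nonneg[OF q]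
        by (smt (verit, best) max.bounded_iff mult_mono)
      also have "cmod (q (a n) (b m - b n)) \<le> Ba * \<delta>"
        using CS2[OF q, of "a n" "b m - b n"] sq[of "b m - b n"] M2 that Ba nm_nonneg[OF q]
        by (smt (verit, best) max.bounded_iff mult_mono)
      also have "\<delta> * Bb + Ba * \<delta> < e"
      proof -
        have 1: "\<delta> * (Ba + Bb + 1) = e / 2" unfolding \<delta>_def using Ba Bb by (simp add: field_simps)
        have 2: "\<delta> * Bb + Ba * \<delta> = \<delta> * (Ba + Bb + 1) - \<delta>" by (simp add: algebra_simps)
        show ?thesis unfolding 2 1 using dp e by simp
      qed
      finally show ?thesis by simp
    qed
    thus "\<exists>M. \<forall>m\<ge>M. \<forall>n\<ge>M. norm (q (a m) (b m) - q (a n) (b n)) < e" by blast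
  qed
  thus ?thesis by (simp add: Cauchy_convergent_iff)
qed


end

locale ctx = vs smul for smul :: "complex \<Rightarrow> 'v::ab_group_add \<Rightarrow> 'v" +
  fixes s w :: "'v \<Rightarrow> 'v \<Rightarrow> complex"
  assumes S: "nonneg_form smul s" and W: "nonneg_form smul w"
begin

abbreviation "N \<equiv> Q s"
abbreviation "Wn \<equiv> Q w"

definition Dd :: "real \<Rightarrow> 'v \<Rightarrow> real" where
  "Dd \<delta> f = Inf ((\<lambda>x. N (f - x)) ` {x. Wn x < \<delta>})"

definition D :: "'v \<Rightarrow> real" where
  "D f = Sup ((\<lambda>\<delta>. Dd \<delta> f) ` {\<delta>. \<delta> > 0})"

lemma Wn0: "Wn 0 = 0" unfolding Q_def using sesq_rules(5)[OF nonneg_sesq[OF W]] by simp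

lemma Dd_le: "Wn x < \<delta> \<Longrightarrow> Dd \<delta> f \<le> N (f - x)"
  unfolding Dd_def
  by (rule cInf_lower) (auto intro!: bdd_belowI[where m=0] Q_nonneg[OF S])

lemma Dd_le_N: "\<delta> > 0 \<Longrightarrow> Dd \<delta> f \<le> N f"
  using Dd_le[of 0 \<delta> f] Wn0 by simp

lemma D_ge: "\<delta> > 0 \<Longrightarrow> Dd \<delta> f \<le> D f"
  unfolding D_def
  by (rule cSup_upper) (auto intro!: bdd_aboveI[where M="N f"] Dd_le_N)

lemma D_LB: assumes "\<eta> > 0" shows "\<exists>\<delta>>0. \<forall>x. Wn x < \<delta> \<longrightarrow> D f - \<eta> < N (f - x)"
proof -
  have "D f - \<eta> < D f" using assms by simp
  hence "\<exists>y\<in>(\<lambda>\<delta>. Dd \<delta> f) ` {\<delta>. \<delta> > 0}. D f - \<eta> < y"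
    unfolding D_def[of f]
    by (subst (asm) less_cSup_iff) (auto intro!: bdd_aboveI[where M="N f"] Dd_le_N exI[of _ 1])
  then obtain \<delta> where d: "\<delta> > 0" "D f - \<eta> < Dd \<delta> f" by auto
  thus ?thesis using Dd_le by (meson less_le_trans)
qed

lemma good_ex: assumes "\<epsilon> > 0" shows "\<exists>h. Wn h < \<epsilon> \<and> N (f - h) < D f + \<epsilon>"
proof -
  have "Dd \<epsilon> f < Dd \<epsilon> f + \<epsilon>" using assms by simp
  hence "\<exists>y\<in>(\<lambda>x. N (f - x)) ` {x. Wn x < \<epsilon>}. y < Dd \<epsilon> f + \<epsilon>"
    unfolding Dd_def[of \<epsilon> f]
    by (subst (asm) cInf_less_iff) (auto intro!: bdd_belowI[where m=0] Q_nonneg[OF S] exI[of _ 0] simp: Wn0 assms)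
  then obtain h where "Wn h < \<epsilon>" "N (f - h) < Dd \<epsilon> f + \<epsilon>" by auto
  thus ?thesis using D_ge[OF assms, of f] by force
qed

definition H :: "'v \<Rightarrow> nat \<Rightarrow> 'v" where
  "H f k = (SOME h. Wn h < 1 / real (Suc k) \<and> N (f - h) < D f + 1 / real (Suc k))"

lemma H_props: "Wn (H f k) < 1 / real (Suc k)" "N (f - H f k) < D f + 1 / real (Suc k)"
proof -
  have "\<exists>h. Wn h < 1 / real (Suc k) \<and> N (f - h) < D f + 1 / real (Suc k)"
    by (rule good_ex) simp
  from someI_ex[OF this] show "Wn (H f k) < 1 / real (Suc k)" "N (f - H f k) < D f + 1 / real (Suc k)"
    unfolding H_def by auto
qed

lemma D_nonneg: "D f \<ge> 0"
proof -
  have "0 \<le> Dd 1 f" unfolding Dd_def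
    by (rule cInf_greatest) (auto simp: Q_nonneg[OF S] Wn0 intro!: exI[of _ 0])
  thus ?thesis using D_ge[of 1 f] by simp
qed

lemma H_bound: "N (H f k) \<le> 2 * N f + 2 * D f + 2"
proof -
  have "N (H f k) = N (f - (f - H f k))" by simp
  also have "\<dots> \<le> 2 * N f + 2 * N (f - H f k)" by (rule Q_diff_le[OF S])
  also have "N (f - H f k) \<le> D f + 1" using H_props(2)[of f k]
    by (smt (verit) divide_le_eq_1 of_nat_0_less_iff of_nat_1 of_nat_le_iff zero_less_Suc Suc_le_mono le0 One_nat_def)
  finally show ?thesis by simp
qed

definition small :: "'a filter \<Rightarrow> ('a \<Rightarrow> real) \<Rightarrow> bool" where
  "small F g \<longleftrightarrow> (\<forall>\<epsilon>>0. eventually (\<lambda>i. g i < \<epsilon>) F)"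

lemma orth:
  assumes h: "small F (\<lambda>i. Wn (h i))" and hg: "\<forall>\<epsilon>>0. eventually (\<lambda>i. N (f - h i) < D f + \<epsilon>) F"
    and u: "small F (\<lambda>i. Wn (u i))" and B: "\<forall>i. N (u i) \<le> B"
  shows "((\<lambda>i. s (f - h i) (u i)) \<longlongrightarrow> 0) F"
  unfolding tendsto_iff
proof (intro allI impI)
  fix \<epsilon> :: real assume e: "\<epsilon> > 0"
  define B' where "B' = max B 0"
  have B'0: "B' \<ge> 0" unfolding B'_def by simp
  define \<tau> where "\<tau> = \<epsilon> / (B' + 1)"
  have tau: "\<tau> > 0" unfolding \<tau>_def using e B'0 by simp
  define \<eta> where "\<eta> = \<tau> * \<epsilon> / 2"
  have eta: "\<eta> > 0" unfolding \<eta>_def using tau e by simp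
  obtain \<delta> where d: "\<delta> > 0" "\<forall>x. Wn x < \<delta> \<longrightarrow> D f - \<eta> < N (f - x)" using D_LB[OF eta] by blast
  have "\<delta> / 4 > 0" using d(1) by simp
  hence ev1: "eventually (\<lambda>i. Wn (h i) < \<delta> / 4) F" using h unfolding small_def by blast
  have "4 * (\<tau>^2 + 1) > 0" by (smt (verit) zero_le_power2)
  hence "\<delta> / (4 * (\<tau>^2 + 1)) > 0" using d(1) by (rule divide_pos_pos[rotated])
  hence ev2: "eventually (\<lambda>i. Wn (u i) < \<delta> / (4 * (\<tau>^2 + 1))) F" using u unfolding small_def by blast
  have ev3: "eventually (\<lambda>i. N (f - h i) < D f + \<eta>) F" using hg eta by simp
  show "eventually (\<lambda>i. dist (s (f - h i) (u i)) 0 < \<epsilon>) F"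
    using ev1 ev2 ev3
  proof eventually_elim
    case (elim i)
    define a where "a = s (f - h i) (u i)"
    define \<alpha> where "\<alpha> = complex_of_real \<tau> * sgn a"
    have ca: "cmod \<alpha> \<le> \<tau>" unfolding \<alpha>_def using tau by (simp add: norm_mult norm_sgn)
    hence ca2: "(cmod \<alpha>)\<^sup>2 \<le> \<tau>^2" by (simp add: power_mono)
    have "Wn (h i + smul \<alpha> (u i)) \<le> 2 * Wn (h i) + 2 * Wn (smul \<alpha> (u i))" by (rule Q_add_le[OF W])
    also have "Wn (smul \<alpha> (u i)) = (cmod \<alpha>)\<^sup>2 * Wn (u i)" by (rule Q_scale[OF W])
    also have "(cmod \<alpha>)\<^sup>2 * Wn (u i) \<le> \<tau>^2 * (\<delta> / (4 * (\<tau>^2 + 1)))"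
      using ca2 elim(2) Q_nonneg[OF W, of "u i"] by (intro mult_mono) auto
    also have "\<tau>^2 * (\<delta> / (4 * (\<tau>^2 + 1))) \<le> \<delta> / 4"
      using d(1) by (simp add: field_simps add_pos_nonneg)
    finally have "Wn (h i + smul \<alpha> (u i)) < \<delta>" using elim(1) by simp
    hence "D f - \<eta> < N (f - (h i + smul \<alpha> (u i)))" using d(2) by blast
    also have "f - (h i + smul \<alpha> (u i)) = (f - h i) - smul \<alpha> (u i)" by (simp add: algebra_simps)
    also have "N \<dots> = N (f - h i) - 2 * Re (cnj \<alpha> * a) + (cmod \<alpha>)\<^sup>2 * N (u i)"
      unfolding a_def by (rule expand[OF S])
    also have "cnj \<alpha> * a = complex_of_real (\<tau> * cmod a)" unfolding \<alpha>_def
      using cnj_sgn_mult[of a] by simp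
    also have "(cmod \<alpha>)\<^sup>2 * N (u i) \<le> \<tau>^2 * B'"
      using ca2 B Q_nonneg[OF S, of "u i"] B'0 unfolding B'_def
      by (intro mult_mono) (auto simp: le_max_iff_disj)
    finally have "D f - \<eta> < N (f - h i) - 2 * (\<tau> * cmod a) + \<tau>^2 * B'" by simp
    hence "2 * \<tau> * cmod a < 2 * \<eta> + \<tau>^2 * B'" using elim(3) by simp
    hence "cmod a < \<eta> / \<tau> + \<tau> * B' / 2" using tau by (simp add: field_simps power2_eq_square)
    also have "\<eta> / \<tau> = \<epsilon> / 2" unfolding \<eta>_def using tau by simp
    also have "\<tau> * B' / 2 < \<epsilon> / 2" unfolding \<tau>_def using e B'0 by (simp add: field_simps)
    finally show ?case unfolding a_def by simp
  qed
qed

lemma small_comb: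
  assumes "small F a" "small F b" "\<forall>i. g i \<le> c * a i + d * b i" "c \<ge> 0" "d \<ge> 0"
  shows "small F g"
  unfolding small_def
proof (intro allI impI)
  fix \<epsilon> :: real assume e: "\<epsilon> > 0"
  have p: "\<epsilon> / (2 * (c + 1)) > 0" "\<epsilon> / (2 * (d + 1)) > 0" using e assms(4,5) by auto
  have "eventually (\<lambda>i. a i < \<epsilon> / (2 * (c + 1))) F" using assms(1) p(1) unfolding small_def by blast
  moreover have "eventually (\<lambda>i. b i < \<epsilon> / (2 * (d + 1))) F" using assms(2) p(2) unfolding small_def by blast
  ultimately show "eventually (\<lambda>i. g i < \<epsilon>) F"
  proof eventually_elim
    case (elim i)
    have "c * a i \<le> c * (\<epsilon> / (2 * (c + 1)))" using elim(1) assms(4) by (intro mult_left_mono) auto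
    also have "\<dots> \<le> \<epsilon> / 2" using assms(4) e by (simp add: field_simps)
    finally have 1: "c * a i \<le> \<epsilon> / 2" .
    have "d * b i \<le> d * (\<epsilon> / (2 * (d + 1)))" using elim(2) assms(5) by (intro mult_left_mono) auto
    also have "d * (\<epsilon> / (2 * (d + 1))) < \<epsilon> / 2" using assms(5) e by (simp add: field_simps)
    finally have 2: "d * b i < \<epsilon> / 2" .
    show ?case using 1 2 assms(3)[rule_format, of i] by simp
  qed
qed

lemma ev_fst: "(\<forall>k\<ge>M. P k) \<Longrightarrow> eventually (\<lambda>p. P (fst p)) (sequentially \<times>\<^sub>F sequentially)"
  unfolding eventually_prod_sequentially by auto

lemma ev_snd: "(\<forall>k\<ge>M. P k) \<Longrightarrow> eventually (\<lambda>p. P (snd p)) (sequentially \<times>\<^sub>F sequentially)"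
  unfolding eventually_prod_sequentially by auto

lemma ev_seq: "(\<forall>k\<ge>M. P k) \<Longrightarrow> eventually P sequentially"
  unfolding eventually_sequentially by auto

lemma H_small_gen:
  assumes "\<And>M P. (\<forall>k\<ge>M. P k) \<Longrightarrow> eventually (\<lambda>i. P (idx i)) F"
  shows "small F (\<lambda>i. Wn (H f (idx i)))"
    and "\<forall>\<epsilon>>0. eventually (\<lambda>i. N (f - H f (idx i)) < D f + \<epsilon>) F"
proof -
  show "small F (\<lambda>i. Wn (H f (idx i)))" unfolding small_def
  proof (intro allI impI)
    fix \<epsilon> :: real assume "\<epsilon> > 0"
    then obtain M where M: "\<forall>k\<ge>M. 1 / real (Suc k) < \<epsilon>" using inv_suc_small by blast
    have "\<forall>k\<ge>M. Wn (H f k) < \<epsilon>" using M H_props(1) less_trans by blast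
    thus "eventually (\<lambda>i. Wn (H f (idx i)) < \<epsilon>) F" by (rule assms)
  qed
  show "\<forall>\<epsilon>>0. eventually (\<lambda>i. N (f - H f (idx i)) < D f + \<epsilon>) F"
  proof (intro allI impI)
    fix \<epsilon> :: real assume "\<epsilon> > 0"
    then obtain M where M: "\<forall>k\<ge>M. 1 / real (Suc k) < \<epsilon>" using inv_suc_small by blast
    have "\<forall>k\<ge>M. N (f - H f k) < D f + \<epsilon>" using M H_props(2) by (smt (verit))
    thus "eventually (\<lambda>i. N (f - H f (idx i)) < D f + \<epsilon>) F" by (rule assms)
  qed
qed

lemmas H_small_seq = H_small_gen[where idx="\<lambda>n. n" and F=sequentially, OF ev_seq]
lemmas H_small_fst = H_small_gen[where idx=fst, OF ev_fst]
lemmas H_small_snd = H_small_gen[where idx=snd, OF ev_snd]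

definition scauchy :: "(nat \<Rightarrow> 'v) \<Rightarrow> bool" where
  "scauchy a \<longleftrightarrow> (\<forall>\<epsilon>>0. \<exists>M. \<forall>n\<ge>M. \<forall>m\<ge>M. N (a n - a m) < \<epsilon>)"

lemma Re_tendsto0: "((\<lambda>i. g i) \<longlongrightarrow> 0) F \<Longrightarrow> ((\<lambda>i. Re (g i)) \<longlongrightarrow> 0) F"
  using tendsto_Re by fastforce

lemma H_cauchy: "scauchy (H f)"
proof -
  define u where "u p = H f (fst p) - H f (snd p)" for p :: "nat \<times> nat"
  define C where "C = 2 * N f + 2 * D f + 2"
  have Bd: "\<forall>p. N (u p) \<le> 2 * C + 2 * C"
  proof
    fix p
    have "N (u p) \<le> 2 * N (H f (fst p)) + 2 * N (H f (snd p))" unfolding u_def by (rule Q_diff_le[OF S])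
    thus "N (u p) \<le> 2 * C + 2 * C" using H_bound[of f] unfolding C_def by (smt (verit))
  qed
  have sm: "small (sequentially \<times>\<^sub>F sequentially) (\<lambda>p. Wn (u p))"
    by (rule small_comb[OF H_small_fst(1)[where f=f] H_small_snd(1)[where f=f], where c=2 and d=2])
       (auto simp: u_def intro: Q_diff_le[OF W])
  have e1: "((\<lambda>p. s (f - H f (snd p)) (u p)) \<longlongrightarrow> 0) (sequentially \<times>\<^sub>F sequentially)"
    by (rule orth[OF H_small_snd(1) H_small_snd(2) sm Bd])
  have e2: "((\<lambda>p. s (f - H f (fst p)) (u p)) \<longlongrightarrow> 0) (sequentially \<times>\<^sub>F sequentially)"
    by (rule orth[OF H_small_fst(1) H_small_fst(2) sm Bd])
  have eq: "s (u p) (u p) = s (f - H f (snd p)) (u p) - s (f - H f (fst p)) (u p)" for p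
  proof -
    have "u p = (f - H f (snd p)) - (f - H f (fst p))" unfolding u_def by (simp add: algebra_simps)
    hence "s (u p) (u p) = s ((f - H f (snd p)) - (f - H f (fst p))) (u p)" by metis
    thus ?thesis by (simp add: sesq_rules[OF nonneg_sesq[OF S]])
  qed
  have "((\<lambda>p. s (u p) (u p)) \<longlongrightarrow> 0) (sequentially \<times>\<^sub>F sequentially)"
    unfolding eq using tendsto_diff[OF e1 e2] by simp
  hence "((\<lambda>p. N (u p)) \<longlongrightarrow> 0) (sequentially \<times>\<^sub>F sequentially)"
    unfolding Q_def by (rule Re_tendsto0)
  thus ?thesis unfolding scauchy_def tendsto_iff eventually_prod_sequentially u_def
    by (force simp: dist_real_def)
qed

lemma H_add: "(\<lambda>n. N (H (f + g) n - (H f n + H g n))) \<longlonglongrightarrow> 0"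
proof -
  define u where "u n = H (f + g) n - (H f n + H g n)" for n
  define C where "C x = 2 * N x + 2 * D x + 2" for x
  have Bd: "\<forall>n. N (u n) \<le> 2 * C (f + g) + 4 * C f + 4 * C g"
  proof
    fix n
    have "N (u n) \<le> 2 * N (H (f+g) n) + 4 * N (H f n) + 4 * N (H g n)" unfolding u_def by (rule Q_diff_le3[OF S])
    thus "N (u n) \<le> 2 * C (f + g) + 4 * C f + 4 * C g" using H_bound[of f n] H_bound[of g n] H_bound[of "f+g" n]
      unfolding C_def by (smt (verit))
  qed
  have sm1: "small sequentially (\<lambda>n. Wn (H f n) + Wn (H g n))"
    by (rule small_comb[OF H_small_seq(1)[where f=f] H_small_seq(1)[where f=g], where c=1 and d=1]) auto
  have sm: "small sequentially (\<lambda>n. Wn (u n))"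
    by (rule small_comb[OF H_small_seq(1)[where f="f+g"] sm1, where c=2 and d=4])
       (auto simp: u_def intro: order.trans[OF Q_diff_le3[OF W]])
  have e1: "(\<lambda>n. s (f - H f n) (u n)) \<longlonglongrightarrow> 0" by (rule orth[OF H_small_seq(1) H_small_seq(2) sm Bd])
  have e2: "(\<lambda>n. s (g - H g n) (u n)) \<longlonglongrightarrow> 0" by (rule orth[OF H_small_seq(1) H_small_seq(2) sm Bd])
  have e3: "(\<lambda>n. s ((f + g) - H (f + g) n) (u n)) \<longlonglongrightarrow> 0" by (rule orth[OF H_small_seq(1) H_small_seq(2) sm Bd])
  have eq: "s (u n) (u n) = s (f - H f n) (u n) + s (g - H g n) (u n) - s ((f + g) - H (f + g) n) (u n)" for n
  proof -
    have "u n = (f - H f n) + (g - H g n) - ((f + g) - H (f + g) n)" unfolding u_def by (simp add: algebra_simps)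
    hence "s (u n) (u n) = s ((f - H f n) + (g - H g n) - ((f + g) - H (f + g) n)) (u n)" by metis
    thus ?thesis by (simp add: sesq_rules[OF nonneg_sesq[OF S]])
  qed
  have "(\<lambda>n. s (u n) (u n)) \<longlonglongrightarrow> 0"
    unfolding eq using tendsto_diff[OF tendsto_add[OF e1 e2] e3] by simp
  hence "(\<lambda>n. N (u n)) \<longlonglongrightarrow> 0" unfolding Q_def by (rule Re_tendsto0)
  thus ?thesis unfolding u_def .
qed

lemma H_scale: "(\<lambda>n. N (H (smul c f) n - smul c (H f n))) \<longlonglongrightarrow> 0"
proof -
  define u where "u n = H (smul c f) n - smul c (H f n)" for n
  define C where "C x = 2 * N x + 2 * D x + 2" for x
  have Bd: "\<forall>n. N (u n) \<le> 2 * C (smul c f) + 2 * ((cmod c)\<^sup>2 * C f)"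
  proof
    fix n
    have "N (u n) \<le> 2 * N (H (smul c f) n) + 2 * N (smul c (H f n))" unfolding u_def by (rule Q_diff_le[OF S])
    also have "N (smul c (H f n)) = (cmod c)\<^sup>2 * N (H f n)" by (rule Q_scale[OF S])
    also have "(cmod c)\<^sup>2 * N (H f n) \<le> (cmod c)\<^sup>2 * C f" unfolding C_def by (intro mult_left_mono H_bound) auto
    finally show "N (u n) \<le> 2 * C (smul c f) + 2 * ((cmod c)\<^sup>2 * C f)"
      using H_bound[of "smul c f" n] unfolding C_def by (smt (verit))
  qed
  have sm: "small sequentially (\<lambda>n. Wn (u n))"
  proof (rule small_comb[OF H_small_seq(1)[where f="smul c f"] H_small_seq(1)[where f=f], where c=2 and d="2 * (cmod c)\<^sup>2"])
    show "\<forall>i. Wn (u i) \<le> 2 * Wn (H (smul c f) i) + 2 * (cmod c)\<^sup>2 * Wn (H f i)"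
      unfolding u_def using Q_diff_le[OF W] Q_scale[OF W] by (metis mult.assoc)
  qed auto
  have e1: "(\<lambda>n. s (f - H f n) (u n)) \<longlonglongrightarrow> 0" by (rule orth[OF H_small_seq(1) H_small_seq(2) sm Bd])
  have e3: "(\<lambda>n. s (smul c f - H (smul c f) n) (u n)) \<longlonglongrightarrow> 0" by (rule orth[OF H_small_seq(1) H_small_seq(2) sm Bd])
  have eq: "s (u n) (u n) = c * s (f - H f n) (u n) - s (smul c f - H (smul c f) n) (u n)" for n
  proof -
    have "u n = smul c (f - H f n) - (smul c f - H (smul c f) n)" unfolding u_def by (simp add: algebra_simps)
    hence "s (u n) (u n) = s (smul c (f - H f n) - (smul c f - H (smul c f) n)) (u n)" by metis
    thus ?thesis by (simp add: sesq_rules[OF nonneg_sesq[OF S]])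
  qed
  have "(\<lambda>n. s (u n) (u n)) \<longlonglongrightarrow> 0"
    unfolding eq using tendsto_diff[OF tendsto_mult_right_zero[OF e1, of c] e3] by simp
  hence "(\<lambda>n. N (u n)) \<longlonglongrightarrow> 0" unfolding Q_def by (rule Re_tendsto0)
  thus ?thesis unfolding u_def .
qed

end

locale ctx2 = ctx smul s w for smul :: "complex \<Rightarrow> 'v::ab_group_add \<Rightarrow> 'v" and s w +
  fixes t s2 :: "'v \<Rightarrow> 'v \<Rightarrow> complex"
  assumes T: "sesquilinear smul t" and S2: "nonneg_form smul s2"
    and TB: "\<forall>f g. cmod (t f g) \<le> nm s f * nm s2 g"
begin

lemma t_tendsto0: fixes d :: "nat \<Rightarrow> 'v" assumes d: "(\<lambda>n. N (d n)) \<longlonglongrightarrow> 0"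
  shows "(\<lambda>n. t (d n) g) \<longlonglongrightarrow> 0"
proof -
  have z: "(\<lambda>n. nm s (d n) * nm s2 g) \<longlonglongrightarrow> 0" using tendsto_mult_left_zero[OF nm_tendsto0[OF S d]] by simp
  show ?thesis using TB by (intro Lim_null_comparison[OF _ z]) auto
qed

end

locale apx = ctx2 smul s w t s2 for smul :: "complex \<Rightarrow> 'v::ab_group_add \<Rightarrow> 'v" and s w t s2 +
  fixes A :: "'v \<Rightarrow> nat \<Rightarrow> 'v"
  assumes Ac: "\<And>f. scauchy (A f)"
    and Aadd: "\<And>f g. (\<lambda>n. N (A (f + g) n - (A f n + A g n))) \<longlonglongrightarrow> 0"
    and Asc: "\<And>c f. (\<lambda>n. N (A (smul c f) n - smul c (A f n))) \<longlonglongrightarrow> 0"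
begin

definition Fm :: "'v \<Rightarrow> 'v \<Rightarrow> complex" where "Fm f g = lim (\<lambda>n. s (A f n) (A g n))"
definition Tp :: "'v \<Rightarrow> 'v \<Rightarrow> complex" where "Tp f g = lim (\<lambda>n. t (A f n) g)"

lemma Abnd: "\<exists>B\<ge>0. \<forall>n. nm s (A f n) \<le> B"
  using qcauchy_bounded[OF S] Ac unfolding scauchy_def by blast

lemma Fm_lim: "(\<lambda>n. s (A f n) (A g n)) \<longlonglongrightarrow> Fm f g"
  unfolding Fm_def using pair_cauchy[OF S] Ac unfolding scauchy_def convergent_LIMSEQ_iff by blast

lemma Tp_lim: "(\<lambda>n. t (A f n) g) \<longlonglongrightarrow> Tp f g"
proof -
  have "Cauchy (\<lambda>n. t (A f n) g)"
  proof (rule CauchyI)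
    fix e :: real assume e: "e > 0"
    define \<delta> where "\<delta> = e / (nm s2 g + 1)"
    have dp: "\<delta> > 0" unfolding \<delta>_def using e nm_nonneg[OF S2, of g] by simp
    obtain M where M: "\<forall>n\<ge>M. \<forall>m\<ge>M. N (A f n - A f m) < \<delta>\<^sup>2" using Ac[of f] dp unfolding scauchy_def by (meson zero_less_power)
    have "norm (t (A f m) g - t (A f n) g) < e" if "m \<ge> M" "n \<ge> M" for m n
    proof -
      have "norm (t (A f m) g - t (A f n) g) = cmod (t (A f m - A f n) g)" by (simp add: sesq_rules[OF T])
      also have "\<dots> \<le> nm s (A f m - A f n) * nm s2 g" using TB by blast
      also have "nm s (A f m - A f n) < \<delta>" unfolding nm_def using real_sqrt_less_mono[of "N (A f m - A f n)" "\<delta>\<^sup>2"] M that dp by simp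
      hence "nm s (A f m - A f n) * nm s2 g \<le> \<delta> * nm s2 g" using nm_nonneg[OF S2, of g] by (simp add: mult_right_mono)
      also have "\<delta> * nm s2 g < e" unfolding \<delta>_def using e nm_nonneg[OF S2, of g] by (simp add: field_simps)
      finally show ?thesis .
    qed
    thus "\<exists>M. \<forall>m\<ge>M. \<forall>n\<ge>M. norm (t (A f m) g - t (A f n) g) < e" by blast
  qed
  thus ?thesis unfolding Tp_def by (simp add: Cauchy_convergent_iff convergent_LIMSEQ_iff)
qed

lemma N_lim: "(\<lambda>n. N (A f n)) \<longlonglongrightarrow> Q Fm f"
  unfolding Q_def using tendsto_Re[OF Fm_lim[of f f]] by simp

lemma Fm_add1: "Fm (f + f') g = Fm f g + Fm f' g"
proof -
  define d where "d n = A (f + f') n - (A f n + A f' n)" for n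
  obtain B where B: "\<forall>n. nm s (A g n) \<le> B" using Abnd by blast
  have z: "(\<lambda>n. s (d n) (A g n)) \<longlonglongrightarrow> 0" unfolding d_def by (rule prod_tendsto0(1)[OF S Aadd B])
  have "s (A (f + f') n) (A g n) = s (A f n) (A g n) + s (A f' n) (A g n) + s (d n) (A g n)" for n
  proof -
    have "A (f + f') n = (A f n + A f' n) + d n" unfolding d_def by simp
    thus ?thesis by (simp add: sesq_rules[OF nonneg_sesq[OF S]])
  qed
  hence "(\<lambda>n. s (A (f + f') n) (A g n)) \<longlonglongrightarrow> Fm f g + Fm f' g + 0"
    using tendsto_add[OF tendsto_add[OF Fm_lim Fm_lim] z] by simp
  thus ?thesis using LIMSEQ_unique[OF Fm_lim] by simp
qed

lemma Fm_sc1: "Fm (smul c f) g = c * Fm f g"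
proof -
  define d where "d n = A (smul c f) n - smul c (A f n)" for n
  obtain B where B: "\<forall>n. nm s (A g n) \<le> B" using Abnd by blast
  have z: "(\<lambda>n. s (d n) (A g n)) \<longlonglongrightarrow> 0" unfolding d_def by (rule prod_tendsto0(1)[OF S Asc B])
  have "s (A (smul c f) n) (A g n) = c * s (A f n) (A g n) + s (d n) (A g n)" for n
  proof -
    have "A (smul c f) n = smul c (A f n) + d n" unfolding d_def by simp
    thus ?thesis by (simp add: sesq_rules[OF nonneg_sesq[OF S]])
  qed
  hence "(\<lambda>n. s (A (smul c f) n) (A g n)) \<longlonglongrightarrow> c * Fm f g + 0"
    using tendsto_add[OF tendsto_mult[OF tendsto_const Fm_lim] z] by simp
  thus ?thesis using LIMSEQ_unique[OF Fm_lim] by simp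
qed

lemma Fm_add2: "Fm f (g + g') = Fm f g + Fm f g'"
proof -
  define d where "d n = A (g + g') n - (A g n + A g' n)" for n
  obtain B where B: "\<forall>n. nm s (A f n) \<le> B" using Abnd by blast
  have z: "(\<lambda>n. s (A f n) (d n)) \<longlonglongrightarrow> 0" unfolding d_def by (rule prod_tendsto0(2)[OF S Aadd B])
  have "s (A f n) (A (g + g') n) = s (A f n) (A g n) + s (A f n) (A g' n) + s (A f n) (d n)" for n
  proof -
    have "A (g + g') n = (A g n + A g' n) + d n" unfolding d_def by simp
    thus ?thesis by (simp add: sesq_rules[OF nonneg_sesq[OF S]])
  qed
  hence "(\<lambda>n. s (A f n) (A (g + g') n)) \<longlonglongrightarrow> Fm f g + Fm f g' + 0"
    using tendsto_add[OF tendsto_add[OF Fm_lim Fm_lim] z] by simp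
  thus ?thesis using LIMSEQ_unique[OF Fm_lim] by simp
qed

lemma Fm_sc2: "Fm f (smul c g) = cnj c * Fm f g"
proof -
  define d where "d n = A (smul c g) n - smul c (A g n)" for n
  obtain B where B: "\<forall>n. nm s (A f n) \<le> B" using Abnd by blast
  have z: "(\<lambda>n. s (A f n) (d n)) \<longlonglongrightarrow> 0" unfolding d_def by (rule prod_tendsto0(2)[OF S Asc B])
  have "s (A f n) (A (smul c g) n) = cnj c * s (A f n) (A g n) + s (A f n) (d n)" for n
  proof -
    have "A (smul c g) n = smul c (A g n) + d n" unfolding d_def by simp
    thus ?thesis by (simp add: sesq_rules[OF nonneg_sesq[OF S]])
  qed
  hence "(\<lambda>n. s (A f n) (A (smul c g) n)) \<longlonglongrightarrow> cnj c * Fm f g + 0"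
    using tendsto_add[OF tendsto_mult[OF tendsto_const Fm_lim] z] by simp
  thus ?thesis using LIMSEQ_unique[OF Fm_lim] by simp
qed

lemma Fm_nonneg: "nonneg_form smul Fm"
proof -
  have "sesquilinear smul Fm" unfolding sesquilinear_def using Fm_add1 Fm_sc1 Fm_add2 Fm_sc2 by blast
  moreover have "Im (Fm f f) = 0" for f
  proof -
    have "(\<lambda>n. Im (s (A f n) (A f n))) \<longlonglongrightarrow> Im (Fm f f)" by (rule tendsto_Im[OF Fm_lim])
    moreover have "(\<lambda>n. Im (s (A f n) (A f n))) = (\<lambda>n. 0)" using nonneg_qf(1)[OF S] by simp
    ultimately show ?thesis using LIMSEQ_unique tendsto_const by metis
  qed
  moreover have "Re (Fm f f) \<ge> 0" for f
    using tendsto_Re[OF Fm_lim[of f f]] nonneg_qf(2)[OF S] by (intro LIMSEQ_le_const) auto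
  ultimately show ?thesis unfolding nonneg_form_def qf_def by blast
qed

lemma Tp_add1: "Tp (f + f') g = Tp f g + Tp f' g"
proof -
  define d where "d n = A (f + f') n - (A f n + A f' n)" for n
  have z: "(\<lambda>n. t (d n) g) \<longlonglongrightarrow> 0" unfolding d_def by (rule t_tendsto0[OF Aadd])
  have "t (A (f + f') n) g = t (A f n) g + t (A f' n) g + t (d n) g" for n
  proof -
    have "A (f + f') n = (A f n + A f' n) + d n" unfolding d_def by simp
    thus ?thesis by (simp add: sesq_rules[OF T])
  qed
  hence "(\<lambda>n. t (A (f + f') n) g) \<longlonglongrightarrow> Tp f g + Tp f' g + 0"
    using tendsto_add[OF tendsto_add[OF Tp_lim Tp_lim] z] by simp
  thus ?thesis using LIMSEQ_unique[OF Tp_lim] by simp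
qed

lemma Tp_sc1: "Tp (smul c f) g = c * Tp f g"
proof -
  define d where "d n = A (smul c f) n - smul c (A f n)" for n
  have z: "(\<lambda>n. t (d n) g) \<longlonglongrightarrow> 0" unfolding d_def by (rule t_tendsto0[OF Asc])
  have "t (A (smul c f) n) g = c * t (A f n) g + t (d n) g" for n
  proof -
    have "A (smul c f) n = smul c (A f n) + d n" unfolding d_def by simp
    thus ?thesis by (simp add: sesq_rules[OF T])
  qed
  hence "(\<lambda>n. t (A (smul c f) n) g) \<longlonglongrightarrow> c * Tp f g + 0"
    using tendsto_add[OF tendsto_mult[OF tendsto_const Tp_lim] z] by simp
  thus ?thesis using LIMSEQ_unique[OF Tp_lim] by simp
qed

lemma Tp_add2: "Tp f (g + g') = Tp f g + Tp f g'"
proof -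
  have "(\<lambda>n. t (A f n) (g + g')) \<longlonglongrightarrow> Tp f g + Tp f g'"
    using tendsto_add[OF Tp_lim Tp_lim] by (simp add: sesq_rules[OF T])
  thus ?thesis using LIMSEQ_unique[OF Tp_lim] by simp
qed

lemma Tp_sc2: "Tp f (smul c g) = cnj c * Tp f g"
proof -
  have "(\<lambda>n. t (A f n) (smul c g)) \<longlonglongrightarrow> cnj c * Tp f g"
    using tendsto_mult[OF tendsto_const Tp_lim] by (simp add: sesq_rules[OF T])
  thus ?thesis using LIMSEQ_unique[OF Tp_lim] by simp
qed

lemma Tp_sesq: "sesquilinear smul Tp"
  unfolding sesquilinear_def using Tp_add1 Tp_sc1 Tp_add2 Tp_sc2 by blast

lemma Tp_bound: "cmod (Tp f g) \<le> nm Fm f * nm s2 g"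
proof -
  have 1: "(\<lambda>n. cmod (t (A f n) g)) \<longlonglongrightarrow> cmod (Tp f g)" by (rule tendsto_norm[OF Tp_lim])
  have 2: "(\<lambda>n. nm s (A f n) * nm s2 g) \<longlonglongrightarrow> nm Fm f * nm s2 g"
    unfolding nm_def by (intro tendsto_mult tendsto_const tendsto_real_sqrt N_lim)
  show ?thesis using TB by (intro tendsto_le[OF _ 2 1]) auto
qed

lemma Fm_Ml: "Fm \<in> M_l smul Tp"
  unfolding M_l_def using Fm_nonneg S2 Tp_bound unfolding nm_def Q_def qf_def by blast

end


context vs begin
lemma Q_neg: "nonneg_form smul q \<Longrightarrow> Q q (- x) = Q q x"
  using nm_neg nm_sq by metis
end

context ctx2 begin

definition K :: "'v \<Rightarrow> nat \<Rightarrow> 'v" where "K f n = f - H f n"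

lemma K_cauchy: "scauchy (K f)"
proof -
  have "N (K f n - K f m) = N (H f n - H f m)" for n m
  proof -
    have "K f n - K f m = - (H f n - H f m)" unfolding K_def by (simp add: algebra_simps)
    thus ?thesis using Q_neg[OF S] by metis
  qed
  thus ?thesis using H_cauchy[of f] unfolding scauchy_def by simp
qed

lemma K_add: "(\<lambda>n. N (K (f + g) n - (K f n + K g n))) \<longlonglongrightarrow> 0"
proof -
  have "N (K (f + g) n - (K f n + K g n)) = N (H (f + g) n - (H f n + H g n))" for n
  proof -
    have "K (f + g) n - (K f n + K g n) = - (H (f + g) n - (H f n + H g n))" unfolding K_def by (simp add: algebra_simps)
    thus ?thesis using Q_neg[OF S] by metis
  qed
  thus ?thesis using H_add by simp
qed

lemma K_sc: "(\<lambda>n. N (K (smul c f) n - smul c (K f n))) \<longlonglongrightarrow> 0"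
proof -
  have "N (K (smul c f) n - smul c (K f n)) = N (H (smul c f) n - smul c (H f n))" for n
  proof -
    have "K (smul c f) n - smul c (K f n) = - (H (smul c f) n - smul c (H f n))" unfolding K_def by (simp add: algebra_simps)
    thus ?thesis using Q_neg[OF S] by metis
  qed
  thus ?thesis using H_scale by simp
qed

sublocale aH: apx smul s w t s2 H
  by unfold_locales (rule H_cauchy, rule H_add, rule H_scale)

sublocale aK: apx smul s w t s2 K
  by unfold_locales (rule K_cauchy, rule K_add, rule K_sc)

lemma decomp: "t f g = aK.Tp f g + aH.Tp f g"
proof -
  have "(\<lambda>n. t (K f n) g) \<longlonglongrightarrow> t f g - aH.Tp f g"
    unfolding K_def using tendsto_diff[OF tendsto_const aH.Tp_lim] by (simp add: sesq_rules[OF T])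
  thus ?thesis using LIMSEQ_unique[OF aK.Tp_lim] by fastforce
qed


lemma H_qbound: "N (H f n) \<le> 2 * N f + 2 * D f + 2" by (rule H_bound)

lemma key_sing:
  assumes M: "\<forall>n\<ge>M. N (H f n - g) \<le> \<epsilon>"
  shows "Q aH.Fm (f - g) \<le> \<epsilon>"
proof -
  define p where "p n = H f n - H g n" for n
  define q where "q n = H g n - g" for n
  have a: "(\<lambda>n. nm s (H (f - g) n)) \<longlonglongrightarrow> nm aH.Fm (f - g)"
    unfolding nm_def by (intro tendsto_real_sqrt aH.N_lim)
  have b: "(\<lambda>n. N (H (f - g) n - p n)) \<longlonglongrightarrow> 0"
  proof -
    have "N (H (f - g) n - p n) = N (H ((f - g) + g) n - (H (f - g) n + H g n))" for n
    proof -
      have "H (f - g) n - p n = - (H ((f - g) + g) n - (H (f - g) n + H g n))" unfolding p_def by (simp add: algebra_simps)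
      thus ?thesis using Q_neg[OF S] by metis
    qed
    thus ?thesis using H_add[of "f - g" g] by presburger
  qed
  have c: "(\<lambda>n. nm s (p n)) \<longlonglongrightarrow> nm aH.Fm (f - g)"
  proof -
    have "(\<lambda>n. nm s (H (f - g) n) - nm s (p n)) \<longlonglongrightarrow> 0"
      using nm_rev[OF S] by (intro Lim_null_comparison[OF _ nm_tendsto0[OF S b]]) auto
    from tendsto_diff[OF a this] show ?thesis by simp
  qed
  have c2: "(\<lambda>n. N (p n)) \<longlonglongrightarrow> Q aH.Fm (f - g)"
    using tendsto_power[OF c, of 2] unfolding nm_sq[OF S] nm_sq[OF aH.Fm_nonneg] .
  have e: "(\<lambda>n. s (p n) (q n)) \<longlonglongrightarrow> 0"
  proof -
    have sm: "small sequentially (\<lambda>n. Wn (p n))"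
      by (rule small_comb[OF H_small_seq(1)[where f=f] H_small_seq(1)[where f=g], where c=2 and d=2])
         (auto simp: p_def intro: Q_diff_le[OF W])
    have Bd: "\<forall>n. N (p n) \<le> 2 * (2 * N f + 2 * D f + 2) + 2 * (2 * N g + 2 * D g + 2)"
    proof
      fix n
      have "N (p n) \<le> 2 * N (H f n) + 2 * N (H g n)" unfolding p_def by (rule Q_diff_le[OF S])
      thus "N (p n) \<le> 2 * (2 * N f + 2 * D f + 2) + 2 * (2 * N g + 2 * D g + 2)"
        using H_bound[of f n] H_bound[of g n] by (smt (verit))
    qed
    have o: "(\<lambda>n. s (g - H g n) (p n)) \<longlonglongrightarrow> 0"
      by (rule orth[OF H_small_seq(1) H_small_seq(2) sm Bd])
    have "s (p n) (q n) = - cnj (s (g - H g n) (p n))" for n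
    proof -
      have "q n = - (g - H g n)" unfolding q_def by simp
      hence "s (q n) (p n) = - s (g - H g n) (p n)" by (simp add: sesq_rules[OF nonneg_sesq[OF S]])
      thus ?thesis using herm[OF S, of "q n" "p n"] by (metis complex_cnj_minus complex_cnj_cnj)
    qed
    moreover have "(\<lambda>n. - cnj (s (g - H g n) (p n))) \<longlonglongrightarrow> 0"
      using tendsto_minus[OF tendsto_cnj[OF o]] by simp
    ultimately show ?thesis by simp
  qed
  have d: "N (p n) \<le> N (H f n - g) + 2 * cmod (s (p n) (q n))" for n
  proof -
    have "N (p n + q n) = N (p n) + 2 * Re (s (p n) (q n)) + N (q n)" by (rule Q_add[OF S])
    moreover have "p n + q n = H f n - g" unfolding p_def q_def by (simp add: algebra_simps)
    moreover have "- Re (s (p n) (q n)) \<le> cmod (s (p n) (q n))" using abs_Re_le_cmod[of "s (p n) (q n)"] by linarith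
    moreover have "N (q n) \<ge> 0" by (rule Q_nonneg[OF S])
    ultimately show ?thesis by (smt (verit))
  qed
  have r: "(\<lambda>n. \<epsilon> + 2 * cmod (s (p n) (q n))) \<longlonglongrightarrow> \<epsilon> + 2 * 0"
    by (intro tendsto_intros) (use tendsto_norm[OF e] in simp)
  show ?thesis
  proof (rule tendsto_le[OF _ _ c2])
    show "(\<lambda>n. \<epsilon> + 2 * cmod (s (p n) (q n))) \<longlonglongrightarrow> \<epsilon>" using r by simp
    show "eventually (\<lambda>n. N (p n) \<le> \<epsilon> + 2 * cmod (s (p n) (q n))) sequentially"
      using M d unfolding eventually_sequentially by (meson add_le_cancel_right order.trans)
  qed simp
qed

lemma sing: "singular_form aH.Fm w"
  unfolding singular_form_def
proof
  fix f
  show "\<exists>fs. (\<lambda>n. qf w (fs n)) \<longlonglongrightarrow> 0 \<and> (\<lambda>n. qf aH.Fm (f - fs n)) \<longlonglongrightarrow> 0"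
  proof (intro exI conjI)
    show "(\<lambda>n. qf w (H f n)) \<longlonglongrightarrow> 0"
    proof (rule Lim_null_comparison[OF _ LIMSEQ_inverse_real_of_nat])
      show "eventually (\<lambda>n. norm (qf w (H f n)) \<le> inverse (real (Suc n))) sequentially"
        using H_props(1)[of f] nonneg_qf(3)[OF W] Q_nonneg[OF W]
        by (simp add: qf_def inverse_eq_divide less_imp_le)
    qed
    show "(\<lambda>n. qf aH.Fm (f - H f n)) \<longlonglongrightarrow> 0"
    proof (rule LIMSEQ_I)
      fix r :: real assume r: "r > 0"
      obtain M where M: "\<forall>n\<ge>M. \<forall>m\<ge>M. N (H f n - H f m) < r / 2" using H_cauchy[of f] r unfolding scauchy_def
        by (meson half_gt_zero)
      have "norm (qf aH.Fm (f - H f m) - 0) < r" if "m \<ge> M" for m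
      proof -
        have "Q aH.Fm (f - H f m) \<le> r / 2"
          by (rule key_sing) (use M that in \<open>auto intro: less_imp_le\<close>)
        moreover have "qf aH.Fm (f - H f m) = complex_of_real (Q aH.Fm (f - H f m))"
          unfolding qf_def by (rule nonneg_qf(3)[OF aH.Fm_nonneg])
        ultimately show ?thesis using Q_nonneg[OF aH.Fm_nonneg, of "f - H f m"] r by simp
      qed
      thus "\<exists>no. \<forall>m\<ge>no. norm (qf aH.Fm (f - H f m) - 0) < r" by blast
    qed
  qed
qed

end


context ctx2 begin

lemma D_lim: "(\<lambda>n. N (x - H x n)) \<longlonglongrightarrow> D x"
proof (rule LIMSEQ_I)
  fix r :: real assume r: "r > 0"
  obtain \<delta> where d: "\<delta> > 0" "\<forall>y. Wn y < \<delta> \<longrightarrow> D x - r < N (x - y)" using D_LB[OF r] by blast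
  obtain M1 where M1: "\<forall>k\<ge>M1. 1 / real (Suc k) < \<delta>" using inv_suc_small[OF d(1)] by blast
  obtain M2 where M2: "\<forall>k\<ge>M2. 1 / real (Suc k) < r" using inv_suc_small[OF r] by blast
  have "norm (N (x - H x n) - D x) < r" if "n \<ge> max M1 M2" for n
  proof -
    have "Wn (H x n) < \<delta>" using H_props(1)[of x n] M1 that by (meson max.bounded_iff less_trans)
    hence 1: "D x - r < N (x - H x n)" using d(2) by blast
    have 2: "N (x - H x n) < D x + r" using H_props(2)[of x n] M2 that by (smt (verit) max.bounded_iff)
    show ?thesis using 1 2 by (simp add: abs_less_iff)
  qed
  thus "\<exists>no. \<forall>n\<ge>no. norm (N (x - H x n) - D x) < r" by blast
qed

lemma QK: "Q aK.Fm x = D x"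
  using aK.N_lim[of x] D_lim[of x] unfolding K_def using LIMSEQ_unique by blast

lemma absc: "abs_cont aK.Fm w"
  unfolding abs_cont_def
proof (intro allI impI)
  fix fs :: "nat \<Rightarrow> 'v"
  assume A: "(\<lambda>n. qf w (fs n)) \<longlonglongrightarrow> 0 \<and> (\<forall>e>0. \<exists>N. \<forall>n\<ge>N. \<forall>m\<ge>N. cmod (qf aK.Fm (fs n - fs m)) < e)"
  note rn = aK.Fm_nonneg
  have W0: "(\<lambda>n. Wn (fs n)) \<longlonglongrightarrow> 0" using tendsto_Re[OF conjunct1[OF A]] by (simp add: Q_def qf_def)
  have qr: "\<And>x. qf aK.Fm x = complex_of_real (Q aK.Fm x)" unfolding qf_def by (rule nonneg_qf(3)[OF rn])
  have rc: "\<forall>\<epsilon>>0. \<exists>M. \<forall>n\<ge>M. \<forall>m\<ge>M. Q aK.Fm (fs n - fs m) < \<epsilon>"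
    using conjunct2[OF A] unfolding qr using Q_nonneg[OF rn] by simp
  obtain B where B: "B \<ge> 0" "\<forall>n. nm aK.Fm (fs n) \<le> B" using qcauchy_bounded[OF rn rc] by blast
  have claim1: "\<exists>M. \<forall>m\<ge>M. cmod (aK.Fm (fs n) (fs m)) \<le> \<epsilon>" if e: "\<epsilon> > 0" for n \<epsilon>
  proof -
    have sm1: "small (sequentially \<times>\<^sub>F sequentially) (\<lambda>p. Wn (fs (snd p)))"
      unfolding small_def
    proof (intro allI impI)
      fix \<epsilon>' :: real assume "\<epsilon>' > 0"
      hence "eventually (\<lambda>m. Wn (fs m) < \<epsilon>') sequentially" using order_tendstoD(2)[OF W0] by blast
      then obtain M where "\<forall>m\<ge>M. Wn (fs m) < \<epsilon>'" unfolding eventually_sequentially by blast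
      thus "eventually (\<lambda>p. Wn (fs (snd p)) < \<epsilon>') (sequentially \<times>\<^sub>F sequentially)" by (rule ev_snd)
    qed
    have sm2: "small (sequentially \<times>\<^sub>F sequentially) (\<lambda>p. Wn (H (fs (snd p)) (fst p)))"
      unfolding small_def
    proof (intro allI impI)
      fix \<epsilon>' :: real assume "\<epsilon>' > 0"
      then obtain M where M: "\<forall>k\<ge>M. 1 / real (Suc k) < \<epsilon>'" using inv_suc_small by blast
      have "\<forall>k\<ge>M. \<forall>m. Wn (H (fs m) k) < \<epsilon>'" using M H_props(1) less_trans by blast
      hence "eventually (\<lambda>p. \<forall>m. Wn (H (fs m) (fst p)) < \<epsilon>') (sequentially \<times>\<^sub>F sequentially)" by (rule ev_fst)
      thus "eventually (\<lambda>p. Wn (H (fs (snd p)) (fst p)) < \<epsilon>') (sequentially \<times>\<^sub>F sequentially)"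
        by (rule eventually_mono) blast
    qed
    have smu: "small (sequentially \<times>\<^sub>F sequentially) (\<lambda>p. Wn (fs (snd p) - H (fs (snd p)) (fst p)))"
      by (rule small_comb[OF sm1 sm2, where c=2 and d=2]) (auto intro: Q_diff_le[OF W])
    have Bd: "\<forall>p. N (fs (snd p) - H (fs (snd p)) (fst p)) \<le> B\<^sup>2 + 1"
    proof
      fix p :: "nat \<times> nat"
      obtain k m where p: "p = (k, m)" by fastforce
      have "N (fs m - H (fs m) k) < D (fs m) + 1 / real (Suc k)" by (rule H_props(2))
      also have "1 / real (Suc k) \<le> 1" by simp
      also have "D (fs m) = (nm aK.Fm (fs m))\<^sup>2" using QK nm_sq[OF rn] by simp
      also have "(nm aK.Fm (fs m))\<^sup>2 \<le> B\<^sup>2" using B nm_nonneg[OF rn] by (simp add: power_mono)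
      finally show "N (fs (snd p) - H (fs (snd p)) (fst p)) \<le> B\<^sup>2 + 1" using p by simp
    qed
    have o: "((\<lambda>p. s (fs n - H (fs n) (fst p)) (fs (snd p) - H (fs (snd p)) (fst p))) \<longlongrightarrow> 0) (sequentially \<times>\<^sub>F sequentially)"
      by (rule orth[OF H_small_fst(1)[where f="fs n"] H_small_fst(2)[where f="fs n"] smu Bd])
    then obtain M where M: "\<forall>m\<ge>M. \<forall>k\<ge>M. cmod (s (fs n - H (fs n) k) (fs m - H (fs m) k)) < \<epsilon>"
      using e unfolding tendsto_iff eventually_prod_sequentially by (auto simp: dist_norm)
    have "cmod (aK.Fm (fs n) (fs m)) \<le> \<epsilon>" if "m \<ge> M" for m
    proof (rule LIMSEQ_le_const2[OF tendsto_norm[OF aK.Fm_lim[of "fs n" "fs m"]]])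
      show "\<exists>N. \<forall>k\<ge>N. cmod (s (K (fs n) k) (K (fs m) k)) \<le> \<epsilon>"
        using M that unfolding K_def by (meson less_imp_le)
    qed
    thus ?thesis by blast
  qed
  show "(\<lambda>n. qf aK.Fm (fs n)) \<longlonglongrightarrow> 0"
  proof (rule LIMSEQ_I)
    fix \<epsilon> :: real assume e: "\<epsilon> > 0"
    define \<delta> where "\<delta> = \<epsilon> / (2 * (B + 1))"
    have dp: "\<delta> > 0" unfolding \<delta>_def using e B by simp
    obtain N0 where N0: "\<forall>n\<ge>N0. \<forall>m\<ge>N0. Q aK.Fm (fs n - fs m) < \<delta>\<^sup>2" using rc dp by (meson zero_less_power)
    have "norm (qf aK.Fm (fs n) - 0) < \<epsilon>" if n: "n \<ge> N0" for n
    proof -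
      have e2: "\<epsilon> / 2 > 0" using e by simp
      obtain M where M: "\<forall>m\<ge>M. cmod (aK.Fm (fs n) (fs m)) \<le> \<epsilon> / 2" using claim1[OF e2] by blast
      define m where "m = max N0 M"
      have m: "m \<ge> N0" "m \<ge> M" unfolding m_def by auto
      have split: "aK.Fm (fs n) (fs n) = aK.Fm (fs n) (fs n - fs m) + aK.Fm (fs n) (fs m)"
        by (simp add: sesq_rules[OF nonneg_sesq[OF rn]])
      have "Q aK.Fm (fs n) = Re (aK.Fm (fs n) (fs n - fs m)) + Re (aK.Fm (fs n) (fs m))"
        unfolding Q_def split by simp
      also have "\<dots> \<le> cmod (aK.Fm (fs n) (fs n - fs m)) + cmod (aK.Fm (fs n) (fs m))"
        by (intro add_mono complex_Re_le_cmod)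
      also have "cmod (aK.Fm (fs n) (fs n - fs m)) \<le> nm aK.Fm (fs n) * nm aK.Fm (fs n - fs m)"
        by (rule CS2[OF rn])
      also have "nm aK.Fm (fs n) * nm aK.Fm (fs n - fs m) \<le> B * \<delta>"
      proof (intro mult_mono)
        show "nm aK.Fm (fs n) \<le> B" using B by blast
        have "Q aK.Fm (fs n - fs m) < \<delta>\<^sup>2" using N0 n m by blast
        thus "nm aK.Fm (fs n - fs m) \<le> \<delta>" unfolding nm_def using real_sqrt_less_mono[of _ "\<delta>\<^sup>2"] dp
          by (smt (verit) real_sqrt_pow2_iff real_sqrt_unique zero_le_power2 real_sqrt_le_iff power2_less_imp_less)
      qed (use B nm_nonneg[OF rn] in auto)
      also have "cmod (aK.Fm (fs n) (fs m)) \<le> \<epsilon> / 2" using M m by blast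
      finally have "Q aK.Fm (fs n) \<le> B * \<delta> + \<epsilon> / 2" by simp
      also have "B * \<delta> < \<epsilon> / 2" unfolding \<delta>_def using B e by (simp add: field_simps)
      finally have "Q aK.Fm (fs n) < \<epsilon>" by simp
      thus ?thesis unfolding qr using Q_nonneg[OF rn, of "fs n"] by simp
    qed
    thus "\<exists>no. \<forall>n\<ge>no. norm (qf aK.Fm (fs n) - 0) < \<epsilon>" by blast
  qed
qed

end

theorem mainTheorem1:
  fixes smul :: "complex \<Rightarrow> 'v::ab_group_add \<Rightarrow> 'v"
    and t w :: "'v \<Rightarrow> 'v \<Rightarrow> complex"
  assumes "vector_space smul"
    and "sesquilinear smul t" and "nonneg_form smul w" and "M_l smul t \<noteq> {}"
  shows "\<exists>tlr tls. sesquilinear smul tlr \<and> sesquilinear smul tls \<and>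
           left_regular smul tlr w \<and> left_strongly_singular smul tls w \<and>
           (\<forall>f g. t f g = tlr f g + tls f g)"
proof -
  obtain s1 where s1: "s1 \<in> M_l smul t" using assms(4) by blast
  then obtain s2 where S1: "nonneg_form smul s1" and S2: "nonneg_form smul s2"
    and b: "\<forall>f g. cmod (t f g) \<le> sqrt (Re (qf s1 f)) * sqrt (Re (qf s2 g))"
    unfolding M_l_def by blast
  interpret c: ctx2 smul s1 w t s2
  proof (unfold_locales)
    show "\<forall>f g. cmod (t f g) \<le> vs.nm s1 f * vs.nm s2 g"
      using b unfolding vs.nm_def[OF vs.intro[OF assms(1)]] vs.Q_def[OF vs.intro[OF assms(1)]] qf_def .
  qed (use assms S1 S2 in \<open>auto simp: vector_space_def\<close>)
  show ?thesis
  proof (intro exI conjI allI)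
    show "sesquilinear smul c.aK.Tp" by (rule c.aK.Tp_sesq)
    show "sesquilinear smul c.aH.Tp" by (rule c.aH.Tp_sesq)
    show "left_regular smul c.aK.Tp w" unfolding left_regular_def using c.aK.Fm_Ml c.absc by blast
    show "left_strongly_singular smul c.aH.Tp w" unfolding left_strongly_singular_def using c.aH.Fm_Ml c.sing by blast
    show "t f g = c.aK.Tp f g + c.aH.Tp f g" for f g by (rule c.decomp)
  qed
qed

end
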